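(* Let $\mathcal{P}_1,\dots,\mathcal{P}_k$ be finite posets. If $\mathbf{T}\in\mathcal{C}(\times_{j=1}^k\mathcal{P}_j)$ is a rank-one tensor, then $\mathbf{T}$ has ND rank one.
   Context: For a finite poset $\mathcal{Q}$, the order cone $\mathcal{C}(\mathcal{Q})$ is the set of $\mathbf{f}\in\mathbb{R}^{\mathcal{Q}}$ with $f_x\ge0$ for all $x$ and $f_x\le f_y$ whenever $x\preceq y$. The product poset $\times_j\mathcal{P}_j$ is ordered componentwise, so $\mathcal{C}(\times_j\mathcal{P}_j)$ consists of nonnegative tensors that are nondecreasing in the product order. A rank-one tensor is a nonzero tensor of the form $\otimes_{j=1}^k\mathbf{v}^{(j)}$ with real vectors $\mathbf{v}^{(j)}\in\mathbb{R}^{\mathcal{P}_j}$. The ND rank is the minimal $r$ with $\mathbf{T}=\sum_{i=1}^r\otimes_j\mathbf{v}^{(ij)}$, $\mathbf{v}^{(ij)}\in\mathcal{C}(\mathcal{P}_j)$. *)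

theory Defs
  imports Complex_Main "HOL-Library.FuncSet"
begin

text \<open>Posets P_1..P_k are given by carriers P j (j < k) with partial orders R j
  (Isabelle's partial_order_on).  Tensors on the product poset are real-valued
  functions on the product carrier PiE {..<k} P (only values on it matter).\<close>

definition prod_rel :: "nat \<Rightarrow> (nat \<Rightarrow> ('a \<times> 'a) set) \<Rightarrow> ((nat \<Rightarrow> 'a) \<times> (nat \<Rightarrow> 'a)) set" where
  "prod_rel k R = {(x, y). \<forall>j<k. (x j, y j) \<in> R j}"

definition order_cone :: "'b set \<Rightarrow> ('b \<times> 'b) set \<Rightarrow> ('b \<Rightarrow> real) \<Rightarrow> bool" where
  "order_cone A R f \<longleftrightarrow> (\<forall>x\<in>A. 0 \<le> f x) \<and> (\<forall>x\<in>A. \<forall>y\<in>A. (x, y) \<in> R \<longrightarrow> f x \<le> f y)"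

definition rank_one_tensor :: "nat \<Rightarrow> (nat \<Rightarrow> 'a set) \<Rightarrow> ((nat \<Rightarrow> 'a) \<Rightarrow> real) \<Rightarrow> bool" where
  "rank_one_tensor k P T \<longleftrightarrow>
     (\<exists>x\<in>PiE {..<k} P. T x \<noteq> 0) \<and>
     (\<exists>v :: nat \<Rightarrow> 'a \<Rightarrow> real. \<forall>x\<in>PiE {..<k} P. T x = (\<Prod>j<k. v j (x j)))"

definition nd_decomp :: "nat \<Rightarrow> (nat \<Rightarrow> 'a set) \<Rightarrow> (nat \<Rightarrow> ('a \<times> 'a) set) \<Rightarrow> ((nat \<Rightarrow> 'a) \<Rightarrow> real) \<Rightarrow> nat \<Rightarrow> bool" where
  "nd_decomp k P R T r \<longleftrightarrow>
     (\<exists>v :: nat \<Rightarrow> nat \<Rightarrow> 'a \<Rightarrow> real.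
        (\<forall>i<r. \<forall>j<k. order_cone (P j) (R j) (v i j)) \<and>
        (\<forall>x\<in>PiE {..<k} P. T x = (\<Sum>i<r. \<Prod>j<k. v i j (x j))))"

definition nd_rank :: "nat \<Rightarrow> (nat \<Rightarrow> 'a set) \<Rightarrow> (nat \<Rightarrow> ('a \<times> 'a) set) \<Rightarrow> ((nat \<Rightarrow> 'a) \<Rightarrow> real) \<Rightarrow> nat" where
  "nd_rank k P R T = (LEAST r. nd_decomp k P R T r)"

end

theory Submission
  imports Defs
begin

theorem theorem11:
  fixes k :: nat and P :: "nat \<Rightarrow> 'a set" and R :: "nat \<Rightarrow> ('a \<times> 'a) set"
    and T :: "(nat \<Rightarrow> 'a) \<Rightarrow> real"
  assumes "k \<ge> 1"
    and "\<And>j. j < k \<Longrightarrow> finite (P j)"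
    and "\<And>j. j < k \<Longrightarrow> partial_order_on (P j) (R j)"
    and "order_cone (PiE {..<k} P) (prod_rel k R) T"
    and "rank_one_tensor k P T"
  shows "nd_rank k P R T = 1"
proof -
  obtain x0 where x0: "x0 \<in> PiE {..<k} P" "T x0 \<noteq> 0"
    using assms(5) unfolding rank_one_tensor_def by blast
  obtain v where v: "\<And>x. x \<in> PiE {..<k} P \<Longrightarrow> T x = (\<Prod>j<k. v j (x j))"
    using assms(5) unfolding rank_one_tensor_def by blast
  have Tnn: "\<And>x. x \<in> PiE {..<k} P \<Longrightarrow> 0 \<le> T x"
    using assms(4) unfolding order_cone_def by blast
  have Tmono: "\<And>x y. x \<in> PiE {..<k} P \<Longrightarrow> y \<in> PiE {..<k} P \<Longrightarrow> (x, y) \<in> prod_rel k R \<Longrightarrow> T x \<le> T y"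
    using assms(4) unfolding order_cone_def by blast
  define w where "w = (\<lambda>j a. \<bar>v j a\<bar>)"
  have Tw: "T x = (\<Prod>j<k. w j (x j))" if "x \<in> PiE {..<k} P" for x
  proof -
    have "T x = \<bar>T x\<bar>" using Tnn[OF that] by simp
    also have "\<dots> = (\<Prod>j<k. w j (x j))" unfolding v[OF that] w_def by (simp add: abs_prod)
    finally show ?thesis .
  qed
  have nz: "w i (x0 i) \<noteq> 0" if "i < k" for i
  proof
    assume "w i (x0 i) = 0"
    then have "(\<Prod>j<k. w j (x0 j)) = 0" using that by (intro prod_zero) auto
    then show False using Tw[OF x0(1)] x0(2) by simp
  qed
  have wnn: "\<And>j a. 0 \<le> w j a" unfolding w_def by simp
  have cone: "order_cone (P j) (R j) (w j)" if j: "j < k" for j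
    unfolding order_cone_def
  proof (intro conjI ballI impI)
    fix a assume "a \<in> P j" show "0 \<le> w j a" by (rule wnn)
  next
    fix a b assume a: "a \<in> P j" and b: "b \<in> P j" and ab: "(a, b) \<in> R j"
    define C where "C = (\<Prod>i\<in>{..<k}-{j}. w i (x0 i))"
    have Cpos: "C > 0" unfolding C_def
      using nz wnn by (intro prod_pos) (auto simp: less_le)
    have refl: "(x0 i, x0 i) \<in> R i" if "i < k" for i
    proof -
      have "refl_on (P i) (R i)" using assms(3)[OF that] unfolding partial_order_on_def preorder_on_def by blast
      moreover have "x0 i \<in> P i" using x0(1) that by auto
      ultimately show ?thesis unfolding refl_on_def by blast
    qed
    have memx: "x0(j := c) \<in> PiE {..<k} P" if "c \<in> P j" for c
      using x0(1) that j by (auto simp: PiE_def Pi_def extensional_def)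
    have val: "T (x0(j := c)) = w j c * C" if "c \<in> P j" for c
    proof -
      have "T (x0(j := c)) = (\<Prod>i<k. w i ((x0(j := c)) i))" by (rule Tw[OF memx[OF that]])
      also have "\<dots> = w j c * (\<Prod>i\<in>{..<k}-{j}. w i ((x0(j := c)) i))"
        using j by (subst prod.remove[of _ j]) auto
      also have "(\<Prod>i\<in>{..<k}-{j}. w i ((x0(j := c)) i)) = C"
        unfolding C_def by (intro prod.cong) auto
      finally show ?thesis .
    qed
    have "(x0(j := a), x0(j := b)) \<in> prod_rel k R"
      unfolding prod_rel_def using refl ab by auto
    then have "T (x0(j := a)) \<le> T (x0(j := b))"
      using Tmono memx a b by blast
    then have "w j a * C \<le> w j b * C" using val a b by simp
    then show "w j a \<le> w j b" using Cpos by simp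
  qed
  have d1: "nd_decomp k P R T 1"
    unfolding nd_decomp_def
    by (rule exI[of _ "\<lambda>_. w"]) (use cone Tw in auto)
  have d0: "\<not> nd_decomp k P R T 0"
    unfolding nd_decomp_def using x0 by auto
  show ?thesis unfolding nd_rank_def
  proof (rule Least_equality)
    show "nd_decomp k P R T 1" by (rule d1)
  next
    fix y assume "nd_decomp k P R T y"
    then have "y \<noteq> 0" using d0 by (metis)
    then show "1 \<le> y" by simp
  qed
qed

end
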